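(* Let $(A,\circ)$ be a right normal band. If every two elements $s,t\in A$ have a greatest lower bound $s\wedge t$ with respect to the natural order $\le$, then $(A,\circ,\wedge)$ is a right normal band with intersection. Conversely, if $(A,\circ,\cap)$ is a right normal band with intersection, then $s\cap t$ is the greatest lower bound of $s,t$ with respect to $\le$. Consequently, an algebra $(A,\circ,\cap)$ is a right normal band with intersection if and only if $(A,\circ)$ is a right normal band and for all $x,y,z\in A$: $x=x\circ y$ and $x=x\circ z$ hold if and only if $x=x\circ(y\cap z)$.
   Context: A right normal band is a semigroup $(A,\circ)$ with $x\circ x=x$ and $(x\circ y)\circ z=(y\circ x)\circ z$. Its natural order is $x\le y$ iff $x=x\circ y$. A right normal band with intersection $(A,\circ,\cap)$: $(A,\circ)$ a right normal band, $(A,\cap)$ a semilattice (associative, commutative, idempotent), $(x\cap y)\circ x=x\cap y$ and $x\circ(y\cap z)=(x\circ y)\cap z$ for all $x,y,z$. *)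

theory Defs
  imports Main
begin

definition closed_op :: "'a set \<Rightarrow> ('a \<Rightarrow> 'a \<Rightarrow> 'a) \<Rightarrow> bool" where
  "closed_op A f \<longleftrightarrow> (\<forall>x\<in>A. \<forall>y\<in>A. f x y \<in> A)"

definition right_normal_band :: "'a set \<Rightarrow> ('a \<Rightarrow> 'a \<Rightarrow> 'a) \<Rightarrow> bool" where
  "right_normal_band A f \<longleftrightarrow> closed_op A f
     \<and> (\<forall>x\<in>A. \<forall>y\<in>A. \<forall>z\<in>A. f (f x y) z = f x (f y z))
     \<and> (\<forall>x\<in>A. f x x = x)
     \<and> (\<forall>x\<in>A. \<forall>y\<in>A. \<forall>z\<in>A. f (f x y) z = f (f y x) z)"

definition nat_le :: "('a \<Rightarrow> 'a \<Rightarrow> 'a) \<Rightarrow> 'a \<Rightarrow> 'a \<Rightarrow> bool" where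
  "nat_le f x y \<longleftrightarrow> x = f x y"

definition semilattice_on :: "'a set \<Rightarrow> ('a \<Rightarrow> 'a \<Rightarrow> 'a) \<Rightarrow> bool" where
  "semilattice_on A g \<longleftrightarrow> closed_op A g
     \<and> (\<forall>x\<in>A. \<forall>y\<in>A. \<forall>z\<in>A. g (g x y) z = g x (g y z))
     \<and> (\<forall>x\<in>A. \<forall>y\<in>A. g x y = g y x)
     \<and> (\<forall>x\<in>A. g x x = x)"

definition rnb_with_intersection :: "'a set \<Rightarrow> ('a \<Rightarrow> 'a \<Rightarrow> 'a) \<Rightarrow> ('a \<Rightarrow> 'a \<Rightarrow> 'a) \<Rightarrow> bool" where
  "rnb_with_intersection A f g \<longleftrightarrow> right_normal_band A f \<and> semilattice_on A g
     \<and> (\<forall>x\<in>A. \<forall>y\<in>A. f (g x y) x = g x y)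
     \<and> (\<forall>x\<in>A. \<forall>y\<in>A. \<forall>z\<in>A. f x (g y z) = g (f x y) z)"

definition is_glb :: "'a set \<Rightarrow> ('a \<Rightarrow> 'a \<Rightarrow> 'a) \<Rightarrow> 'a \<Rightarrow> 'a \<Rightarrow> 'a \<Rightarrow> bool" where
  "is_glb A f m s t \<longleftrightarrow> m \<in> A \<and> nat_le f m s \<and> nat_le f m t
     \<and> (\<forall>x\<in>A. nat_le f x s \<and> nat_le f x t \<longrightarrow> nat_le f x m)"

end

theory Submission
  imports Defs
begin

lemma rnb_facts:
  assumes "right_normal_band A f"
  shows "\<And>x y. x\<in>A \<Longrightarrow> y\<in>A \<Longrightarrow> f x y \<in> A"
    and "\<And>x y z. x\<in>A \<Longrightarrow> y\<in>A \<Longrightarrow> z\<in>A \<Longrightarrow> f (f x y) z = f x (f y z)"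
    and "\<And>x. x\<in>A \<Longrightarrow> f x x = x"
    and "\<And>x y z. x\<in>A \<Longrightarrow> y\<in>A \<Longrightarrow> z\<in>A \<Longrightarrow> f (f x y) z = f (f y x) z"
  using assms unfolding right_normal_band_def closed_op_def by blast+

lemma nle_trans:
  assumes "right_normal_band A f" "x\<in>A" "y\<in>A" "z\<in>A" "nat_le f x y" "nat_le f y z"
  shows "nat_le f x z"
  using assms rnb_facts[OF assms(1)] unfolding nat_le_def by metis

lemma nle_antisym:
  assumes "right_normal_band A f" "x\<in>A" "y\<in>A" "nat_le f x y" "nat_le f y x"
  shows "x = y"
proof -
  note R = rnb_facts[OF assms(1)]
  have x: "x = f x y" and y: "y = f y x" using assms unfolding nat_le_def by auto
  have "f (f x y) x = f (f y x) x" using R(4) assms by blast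
  also have "f (f y x) x = f y (f x x)" using R(2) assms by blast
  also have "\<dots> = y" using R(3) assms y by simp
  finally have "f (f x y) x = y" .
  hence "f x x = y" using x by simp
  thus ?thesis using R(3) assms by simp
qed

lemma glb_unique:
  assumes "right_normal_band A f" "is_glb A f m s t" "is_glb A f m' s t"
  shows "m = m'"
  using assms nle_antisym[OF assms(1)] unfolding is_glb_def by blast

lemma nle_refl: "right_normal_band A f \<Longrightarrow> x \<in> A \<Longrightarrow> nat_le f x x"
  using rnb_facts unfolding nat_le_def by metis

lemma part1:
  assumes R0: "right_normal_band A f" and G: "\<forall>s\<in>A. \<forall>t\<in>A. is_glb A f (g s t) s t"
  shows "rnb_with_intersection A f g"
proof -
  note R = rnb_facts[OF R0]
  have gA: "\<And>s t. s\<in>A \<Longrightarrow> t\<in>A \<Longrightarrow> g s t \<in> A" using G unfolding is_glb_def by blast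
  have gl1: "\<And>s t. s\<in>A \<Longrightarrow> t\<in>A \<Longrightarrow> nat_le f (g s t) s" using G unfolding is_glb_def by blast
  have gl2: "\<And>s t. s\<in>A \<Longrightarrow> t\<in>A \<Longrightarrow> nat_le f (g s t) t" using G unfolding is_glb_def by blast
  have gg: "\<And>s t w. s\<in>A \<Longrightarrow> t\<in>A \<Longrightarrow> w\<in>A \<Longrightarrow> nat_le f w s \<Longrightarrow> nat_le f w t \<Longrightarrow> nat_le f w (g s t)"
    using G unfolding is_glb_def by blast
  have isg: "\<And>m s t. s\<in>A \<Longrightarrow> t\<in>A \<Longrightarrow> is_glb A f m s t \<Longrightarrow> g s t = m"
    using glb_unique[OF R0] G by blast
  have tr: "\<And>x y z. x\<in>A \<Longrightarrow> y\<in>A \<Longrightarrow> z\<in>A \<Longrightarrow> nat_le f x y \<Longrightarrow> nat_le f y z \<Longrightarrow> nat_le f x z"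
    using nle_trans[OF R0] by blast
  have comm: "\<And>x y. x\<in>A \<Longrightarrow> y\<in>A \<Longrightarrow> g x y = g y x"
    by (rule isg) (auto simp: is_glb_def gA gl1 gl2 gg)
  have idem: "\<And>x. x\<in>A \<Longrightarrow> g x x = x"
    by (rule isg) (auto simp: is_glb_def nle_refl[OF R0])
  have assoc: "\<And>x y z. x\<in>A \<Longrightarrow> y\<in>A \<Longrightarrow> z\<in>A \<Longrightarrow> g (g x y) z = g x (g y z)"
  proof -
    fix x y z assume A: "x\<in>A" "y\<in>A" "z\<in>A"
    show "g (g x y) z = g x (g y z)"
    proof (rule sym, rule isg)
      show "is_glb A f (g (g x y) z) x (g y z)" unfolding is_glb_def
      proof (intro conjI ballI impI)
        show "g (g x y) z \<in> A" using A gA by blast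
        show "nat_le f (g (g x y) z) x" using A gA gl1 tr by meson
        show "nat_le f (g (g x y) z) (g y z)" using A gA gl1 gl2 gg tr by meson
        fix w assume w: "w\<in>A" "nat_le f w x \<and> nat_le f w (g y z)"
        hence "nat_le f w y" "nat_le f w z" using A gA gl1 gl2 tr by meson+
        thus "nat_le f w (g (g x y) z)" using A gA gg w by meson
      qed
    qed (use A gA in auto)
  qed
  have ax3: "\<And>x y. x\<in>A \<Longrightarrow> y\<in>A \<Longrightarrow> f (g x y) x = g x y"
    using gl1 unfolding nat_le_def by metis
  have ax4: "\<And>x y z. x\<in>A \<Longrightarrow> y\<in>A \<Longrightarrow> z\<in>A \<Longrightarrow> f x (g y z) = g (f x y) z"
  proof -
    fix x y z assume A: "x\<in>A" "y\<in>A" "z\<in>A"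
    define m where "m = g y z"
    have mA: "m \<in> A" using A gA m_def by blast
    have my: "f m y = m" and mz: "f m z = m" using gl1 gl2 A unfolding m_def nat_le_def by metis+
    show "f x (g y z) = g (f x y) z"
    proof (rule sym, rule isg)
      show "is_glb A f (f x (g y z)) (f x y) z" unfolding is_glb_def m_def[symmetric]
      proof (intro conjI ballI impI)
        show "f x m \<in> A" using R(1) A mA by blast
        have "f (f x m) (f x y) = f (f m x) (f x y)" using R A mA by metis
        also have "\<dots> = f m (f x y)" using R A mA by metis
        also have "\<dots> = f (f m x) y" using R A mA by metis
        also have "\<dots> = f (f x m) y" using R A mA by metis
        also have "\<dots> = f x m" using R A mA my by metis
        finally show "nat_le f (f x m) (f x y)" unfolding nat_le_def by simp
        show "nat_le f (f x m) z" unfolding nat_le_def using R A mA mz by metis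
        fix w assume w: "w\<in>A" "nat_le f w (f x y) \<and> nat_le f w z"
        hence w1: "w = f w (f x y)" and w2: "w = f w z" unfolding nat_le_def by auto
        have "f w y = f (f w (f x y)) y" using w1 by simp
        also have "\<dots> = w" using R A w(1) w1 by metis
        finally have "nat_le f w y" unfolding nat_le_def by simp
        hence wm: "w = f w m" using gg A w(1) w2 unfolding m_def nat_le_def by metis
        have "f w (f x m) = f (f w x) m" using R A mA w(1) by metis
        also have "\<dots> = f (f (f w (f x y)) x) m" using w1 by simp
        also have "\<dots> = f (f (f w x) y) (f x m)" using R A mA w(1) by metis
        also have "\<dots> = f (f (f w x) x) (f y m)" using R A mA w(1) by metis
        also have "\<dots> = f (f w x) (f y m)" using R A mA w(1) by metis
        also have "\<dots> = f (f w x) m" using R A mA my by metis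
        also have "\<dots> = f (f x w) m" using R A mA w(1) by metis
        also have "\<dots> = f x w" using R A mA w(1) wm by metis
        finally have e1: "f w (f x m) = f x w" .
        have "f x w = f x (f w (f x y))" using w1 by simp
        also have "\<dots> = f (f x w) (f x y)" using R A w(1) by metis
        also have "\<dots> = f (f w x) (f x y)" using R A w(1) by metis
        also have "\<dots> = f w (f x y)" using R A w(1) by metis
        also have "\<dots> = w" using w1 by simp
        finally show "nat_le f w (f x m)" using e1 unfolding nat_le_def by simp
      qed
    qed (use A R in auto)
  qed
  show ?thesis unfolding rnb_with_intersection_def semilattice_on_def closed_op_def
    using R0 gA comm idem assoc ax3 ax4 by blast
qed

lemma part2:
  assumes "rnb_with_intersection A f g"
  shows "\<forall>s\<in>A. \<forall>t\<in>A. is_glb A f (g s t) s t"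
proof (intro ballI)
  fix s t assume st: "s\<in>A" "t\<in>A"
  have R0: "right_normal_band A f" using assms unfolding rnb_with_intersection_def by blast
  note R = rnb_facts[OF R0]
  have gA: "\<And>s t. s\<in>A \<Longrightarrow> t\<in>A \<Longrightarrow> g s t \<in> A"
    and comm: "\<And>x y. x\<in>A \<Longrightarrow> y\<in>A \<Longrightarrow> g x y = g y x"
    and idem: "\<And>x. x\<in>A \<Longrightarrow> g x x = x"
    and ax3: "\<And>x y. x\<in>A \<Longrightarrow> y\<in>A \<Longrightarrow> f (g x y) x = g x y"
    and ax4: "\<And>x y z. x\<in>A \<Longrightarrow> y\<in>A \<Longrightarrow> z\<in>A \<Longrightarrow> f x (g y z) = g (f x y) z"
    using assms unfolding rnb_with_intersection_def semilattice_on_def closed_op_def by blast+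
  show "is_glb A f (g s t) s t" unfolding is_glb_def nat_le_def
  proof (intro conjI ballI impI)
    show "g s t \<in> A" using gA st by blast
    show "g s t = f (g s t) s" using ax3 st by simp
    show "g s t = f (g s t) t" using ax3 comm st by metis
    fix w assume w: "w\<in>A" "w = f w s \<and> w = f w t"
    have "f w (g s t) = g w t" using ax4 st w by metis
    have a: "f w (g w t) = g w t" using ax4 w st R(3) by metis
    have b: "f w (g t w) = w" using ax4 w st idem by metis
    show "w = f w (g s t)" using a b comm w st ax4 by metis
  qed
qed

theorem proposition5p1:
  fixes A :: "'a set" and f g :: "'a \<Rightarrow> 'a \<Rightarrow> 'a"
  shows "(right_normal_band A f \<and> (\<forall>s\<in>A. \<forall>t\<in>A. is_glb A f (g s t) s t)
            \<longrightarrow> rnb_with_intersection A f g)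
       \<and> (rnb_with_intersection A f g \<longrightarrow> (\<forall>s\<in>A. \<forall>t\<in>A. is_glb A f (g s t) s t))
       \<and> (closed_op A g \<longrightarrow>
            (rnb_with_intersection A f g \<longleftrightarrow>
              right_normal_band A f \<and>
              (\<forall>x\<in>A. \<forall>y\<in>A. \<forall>z\<in>A. (x = f x y \<and> x = f x z) \<longleftrightarrow> x = f x (g y z))))"
proof (intro conjI impI)
  show "right_normal_band A f \<and> (\<forall>s\<in>A. \<forall>t\<in>A. is_glb A f (g s t) s t) \<Longrightarrow> rnb_with_intersection A f g"
    using part1 by blast
  show "rnb_with_intersection A f g \<Longrightarrow> \<forall>s\<in>A. \<forall>t\<in>A. is_glb A f (g s t) s t"
    using part2 by blast
  assume cg: "closed_op A g"
  show "rnb_with_intersection A f g \<longleftrightarrow>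
          right_normal_band A f \<and>
          (\<forall>x\<in>A. \<forall>y\<in>A. \<forall>z\<in>A. (x = f x y \<and> x = f x z) \<longleftrightarrow> x = f x (g y z))"
  proof
    assume H: "rnb_with_intersection A f g"
    have R0: "right_normal_band A f" using H unfolding rnb_with_intersection_def by blast
    have G: "\<forall>s\<in>A. \<forall>t\<in>A. is_glb A f (g s t) s t" using part2[OF H] .
    show "right_normal_band A f \<and>
          (\<forall>x\<in>A. \<forall>y\<in>A. \<forall>z\<in>A. (x = f x y \<and> x = f x z) \<longleftrightarrow> x = f x (g y z))"
    proof -
      have "(x = f x y \<and> x = f x z) \<longleftrightarrow> x = f x (g y z)" if A: "x\<in>A" "y\<in>A" "z\<in>A" for x y z
      proof
        show "x = f x y \<and> x = f x z \<Longrightarrow> x = f x (g y z)"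
          using G A unfolding is_glb_def nat_le_def by blast
        assume h: "x = f x (g y z)"
        have "g y z \<in> A" "nat_le f (g y z) y" "nat_le f (g y z) z" using G A unfolding is_glb_def by blast+
        thus "x = f x y \<and> x = f x z" using h A nle_trans[OF R0, of x "g y z"] unfolding nat_le_def by blast
      qed
      thus ?thesis using R0 by blast
    qed
  next
    assume H: "right_normal_band A f \<and>
          (\<forall>x\<in>A. \<forall>y\<in>A. \<forall>z\<in>A. (x = f x y \<and> x = f x z) \<longleftrightarrow> x = f x (g y z))"
    hence R0: "right_normal_band A f" by blast
    note R = rnb_facts[OF R0]
    have "\<forall>s\<in>A. \<forall>t\<in>A. is_glb A f (g s t) s t"
    proof (intro ballI)
      fix s t assume st: "s\<in>A" "t\<in>A"
      have mA: "g s t \<in> A" using cg st unfolding closed_op_def by blast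
      have "g s t = f (g s t) (g s t)" using R(3) mA by simp
      hence "g s t = f (g s t) s \<and> g s t = f (g s t) t" using H mA st by blast
      thus "is_glb A f (g s t) s t" unfolding is_glb_def nat_le_def using mA H st by blast
    qed
    thus "rnb_with_intersection A f g" using part1 R0 by blast
  qed
qed

end
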